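(* Let $n\ge2$, $p\in(0,1)$, let $X_1,\dots,X_{n-2}$ be i.i.d. with $\mathbb P(X_i=-1)=p$, $\mathbb P(X_i=1)=1-p$, and let $W_k=\sum_{i=1}^kX_i$ for $0\le k\le n-2$. Then $$\tilde T_n^p\stackrel{d}{=}\frac n2+\max_{0\le k\le n-2}W_k-\frac{W_{n-2}}{2}.$$
   Context: For $n\ge2$, $p\in(0,1)$, $\tilde\Omega_n^p$ is the probability space of strings $\omega\in\{0,1\}^n$ with $\omega_1=0$, $\omega_n=1$ and $\omega_2,\dots,\omega_{n-1}$ independent, each $1$ with probability $p$ and $0$ with probability $1-p$. One step of the evolution replaces simultaneously every occurrence of the consecutive substring "01" by "10"; $\tilde T_n^p(\omega)$ is the number of steps needed to reach a string of the form $1\cdots10\cdots0$. $\stackrel d=$ denotes equality in distribution. *)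

theory Defs
  imports "HOL-Probability.Probability"
begin

text \<open>Binary strings are lists of booleans: True = 1, False = 0.\<close>

text \<open>One step: simultaneously replace every occurrence of 01 by 10
  (occurrences of 01 never overlap, so a left-to-right scan is exact).\<close>
fun evol_step :: "bool list \<Rightarrow> bool list" where
  "evol_step (False # True # xs) = True # False # evol_step xs"
| "evol_step (x # xs) = x # evol_step xs"
| "evol_step [] = []"

definition is_sorted_str :: "bool list \<Rightarrow> bool" where
  "is_sorted_str w \<longleftrightarrow> (\<exists>a b. w = replicate a True @ replicate b False)"

definition steps_to_sort :: "bool list \<Rightarrow> nat" where
  "steps_to_sort w = (LEAST t. is_sorted_str ((evol_step ^^ t) w))"

fun bern_list :: "nat \<Rightarrow> real \<Rightarrow> bool list pmf" where
  "bern_list 0 p = return_pmf []"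
| "bern_list (Suc k) p =
     bind_pmf (bernoulli_pmf p) (\<lambda>b. map_pmf (\<lambda>bs. b # bs) (bern_list k p))"

text \<open>Law of \<open>\<tilde>T_n^p\<close>: \<open>\<omega>_1 = 0\<close>, \<open>\<omega>_n = 1\<close>, middle bits i.i.d. 1 w.p. p.\<close>
definition T_dist :: "nat \<Rightarrow> real \<Rightarrow> nat pmf" where
  "T_dist n p = map_pmf (\<lambda>mid. steps_to_sort (False # mid @ [True])) (bern_list (n - 2) p)"

definition walk :: "bool list \<Rightarrow> nat \<Rightarrow> real" where
  "walk bs k = sum_list (map (\<lambda>b. if b then -1 else 1) (take k bs))"

definition walk_dist :: "nat \<Rightarrow> real \<Rightarrow> real pmf" where
  "walk_dist n p = map_pmf
     (\<lambda>bs. real n / 2 + Max (walk bs ` {0..n-2}) - walk bs (n - 2) / 2)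
     (bern_list (n - 2) p)"

end

theory Submission
  imports Defs
begin

abbreviation cnt :: "bool list \<Rightarrow> nat" where "cnt xs \<equiv> length (filter (\<lambda>a. a) xs)"

fun hh :: "nat \<Rightarrow> bool list \<Rightarrow> nat" where
  "hh c [] = 0"
| "hh c (False # xs) = hh (Suc c) xs"
| "hh c (True # xs) = max (if c > 0 then c + cnt xs else 0) (hh c xs)"

lemma evol_rep: "evol_step (replicate k True @ ys) = replicate k True @ evol_step ys"
  by (induction k) auto

lemma cnt_evol: "cnt (evol_step r) = cnt r"
  by (induction r rule: evol_step.induct) auto

lemma decomp: "\<exists>k ys. r = replicate k True @ ys \<and> (ys = [] \<or> hd ys = False)"
proof (induction r)
  case Nil then show ?case by auto
next
  case (Cons a r)
  then obtain k ys where r: "r = replicate k True @ ys" "ys = [] \<or> hd ys = False" by blast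
  show ?case
  proof (cases a)
    case True
    then show ?thesis using r by (intro exI[of _ "Suc k"] exI[of _ ys]) auto
  next
    case False
    then show ?thesis by (intro exI[of _ 0] exI[of _ "a # r"]) auto
  qed
qed

lemma hh_rep: "hh d (replicate k True @ Y) =
   (if k > 0 \<and> d > 0 then max (d + k - 1 + cnt Y) (hh d Y) else hh d Y)"
  by (induction k) auto

lemma hh_zero: "cnt Y = 0 \<Longrightarrow> hh d Y = 0"
proof (induction Y arbitrary: d)
  case Nil then show ?case by simp
next
  case (Cons a Y) then show ?case by (cases a) auto
qed

lemma hh_lb: "d > 0 \<Longrightarrow> cnt Y > 0 \<Longrightarrow> hh d Y \<ge> d + cnt Y - 1"
proof (induction Y arbitrary: d)
  case Nil then show ?case by simp
next
  case (Cons a Y)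
  show ?case
  proof (cases a)
    case True then show ?thesis using Cons by auto
  next
    case False
    then show ?thesis using Cons.IH[of "Suc d"] Cons.prems by auto
  qed
qed

lemma hh_lb': "cnt Y > 0 \<Longrightarrow> hh d (False # Y) \<ge> d + cnt Y"
  using hh_lb[of "Suc d" Y] by auto

lemma key: "ys = [] \<or> hd ys = False \<Longrightarrow> hh c (evol_step ys) = hh c ys - 1"
proof (induction "length ys" arbitrary: ys c rule: less_induct)
  case less
  show ?case
  proof (cases ys)
    case Nil then show ?thesis by simp
  next
    case (Cons a zs)
    with less.prems have a: "a = False" by auto
    show ?thesis
    proof (cases zs)
      case Nil then show ?thesis using Cons a by simp
    next
      case (Cons b r)
      show ?thesis
      proof (cases b)
        case False
        have "hh (Suc c) (evol_step (False # r)) = hh (Suc c) (False # r) - 1"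
          using less.hyps[of "False # r" "Suc c"] \<open>ys = a # zs\<close> Cons by simp
        then show ?thesis using \<open>ys = a # zs\<close> Cons a False by simp
      next
        case True
        obtain k ys' where r: "r = replicate k True @ ys'" "ys' = [] \<or> hd ys' = False"
          using decomp by blast
        have IH: "hh (Suc c) (evol_step ys') = hh (Suc c) ys' - 1"
          using less.hyps[of ys' "Suc c"] r \<open>ys = a # zs\<close> Cons by simp
        have ys: "ys = False # True # replicate k True @ ys'"
          using \<open>ys = a # zs\<close> Cons a True r by simp
        have cr: "cnt (evol_step ys') = cnt ys'" by (rule cnt_evol)
        have L: "cnt ys' > 0 \<Longrightarrow> hh (Suc c) ys' \<ge> Suc c + cnt ys'"
        proof -
          assume "cnt ys' > 0"
          then obtain Y where "ys' = False # Y" using r(2) by (cases ys') auto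
          then show ?thesis using hh_lb'[of Y "Suc c"] \<open>cnt ys' > 0\<close> by simp
        qed
        have Z: "cnt ys' = 0 \<Longrightarrow> hh (Suc c) ys' = 0" by (rule hh_zero)
        show ?thesis
          unfolding ys using IH cr L Z
          by (cases "filter (\<lambda>a. a) ys' = []"; cases "c = 0"; cases "k = 0") (auto simp: evol_rep hh_rep cnt_evol)
      qed
    qed
  qed
qed

lemma step_dec: "hh 0 (evol_step w) = hh 0 w - 1"
proof -
  obtain k ys where w: "w = replicate k True @ ys" "ys = [] \<or> hd ys = False"
    using decomp by blast
  show ?thesis using key[OF w(2), of 0] unfolding w by (simp add: evol_rep hh_rep)
qed

lemma iter_dec: "hh 0 ((evol_step ^^ t) w) = hh 0 w - t"
  by (induction t) (auto simp: step_dec)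

lemma sorted_iff: "is_sorted_str w \<longleftrightarrow> hh 0 w = 0"
proof
  assume "is_sorted_str w"
  then obtain a b where "w = replicate a True @ replicate b False"
    unfolding is_sorted_str_def by blast
  then show "hh 0 w = 0" by (simp add: hh_rep hh_zero)
next
  assume h: "hh 0 w = 0"
  obtain k ys where w: "w = replicate k True @ ys" "ys = [] \<or> hd ys = False"
    using decomp by blast
  show "is_sorted_str w"
  proof (cases ys)
    case Nil then show ?thesis using w unfolding is_sorted_str_def
      by (intro exI[of _ k] exI[of _ 0]) auto
  next
    case (Cons y Y)
    with w have ys: "ys = False # Y" by auto
    have "cnt Y = 0"
    proof (rule ccontr)
      assume "cnt Y \<noteq> 0"
      then have "hh 0 ys \<ge> cnt Y" using hh_lb'[of Y 0] ys by simp
      moreover have "hh 0 w = hh 0 ys" using w by (simp add: hh_rep)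
      ultimately show False using h \<open>cnt Y \<noteq> 0\<close> by simp
    qed
    then have "Y = replicate (length Y) False"
      by (induction Y) (auto split: if_splits)
    then have "ys = replicate (Suc (length Y)) False" using ys by (metis replicate_Suc)
    then show ?thesis using w unfolding is_sorted_str_def by blast
  qed
qed

lemma steps_hh: "steps_to_sort w = hh 0 w"
  unfolding steps_to_sort_def sorted_iff iter_dec
  by (rule Least_equality) auto

fun M :: "bool list \<Rightarrow> real" where
  "M [] = 0"
| "M (b # xs) = max 0 ((if b then -1 else 1) + M xs)"

lemma M_nonneg: "M xs \<ge> 0"
  by (cases xs) auto

lemma hh_app: "c > 0 \<Longrightarrow> real (hh c (xs @ [True])) = real c + real (cnt xs) + M xs"
proof (induction xs arbitrary: c)
  case Nil then show ?case by simp
next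
  case (Cons b xs)
  show ?case
  proof (cases b)
    case True
    have e: "real (hh c (xs@[True])) = real c + real (cnt xs) + M xs" using Cons by simp
    have h1: "hh c (True # xs @ [True]) = max (c + cnt xs + 1) (hh c (xs@[True]))"
      using Cons.prems by simp
    have "real (hh c (True # xs @ [True])) = max (real c + real (cnt xs) + 1) (real c + real (cnt xs) + M xs)"
      unfolding h1 of_nat_max e by simp
    also have "\<dots> = real c + real (cnt (True # xs)) + M (True # xs)"
      by (simp add: max_def)
    finally show ?thesis using True by simp
  next
    case False
    then show ?thesis using Cons.IH[of "Suc c"] M_nonneg[of xs] by (auto simp: max_def)
  qed
qed

lemma walk_Suc: "walk (b # xs) (Suc k) = (if b then -1 else 1) + walk xs k"
  unfolding walk_def by simp

lemma walk_0: "walk xs 0 = 0"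
  unfolding walk_def by simp

lemma M_Max: "M xs = Max (walk xs ` {0..length xs})"
proof (induction xs)
  case Nil then show ?case by (simp add: walk_0)
next
  case (Cons b xs)
  have set: "{0..length (b # xs)} = insert 0 (Suc ` {0..length xs})"
    by (auto simp: image_iff)
  have "walk (b # xs) ` {0..length (b # xs)} =
        insert 0 ((\<lambda>k. (if b then -1 else 1) + walk xs k) ` {0..length xs})"
    unfolding set image_insert image_image walk_0 walk_Suc by simp
  moreover have "Max ((\<lambda>k. (if b then -1 else 1) + walk xs k) ` {0..length xs})
      = (if b then -1 else 1) + Max (walk xs ` {0..length xs})"
  proof -
    have "(\<lambda>k. (if b then -1 else 1) + walk xs k) ` {0..length xs} = (\<lambda>x. (if b then -1 else 1) + x) ` (walk xs ` {0..length xs})"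
      by (simp add: image_image)
    also have "Max \<dots> = (if b then -1 else 1) + Max (walk xs ` {0..length xs})"
      by (rule mono_Max_commute[symmetric]) (auto simp: mono_def)
    finally show ?thesis .
  qed
  ultimately show ?case using Cons
    by (simp add: max.commute)
qed

lemma walk_len: "walk xs (length xs) = real (length xs) - 2 * real (cnt xs)"
  unfolding walk_def by (induction xs) auto

lemma bern_len: "xs \<in> set_pmf (bern_list k p) \<Longrightarrow> length xs = k"
  by (induction k arbitrary: xs) auto

theorem lemma3p1:
  fixes n :: nat and p :: real
  assumes "n \<ge> 2" and "0 < p" and "p < 1"
  shows "map_pmf real (T_dist n p) = walk_dist n p"
  unfolding T_dist_def walk_dist_def map_pmf_comp
proof (rule map_pmf_cong[OF refl])
  fix mid assume "mid \<in> set_pmf (bern_list (n - 2) p)"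
  then have len: "length mid = n - 2" by (rule bern_len)
  have "real (steps_to_sort (False # mid @ [True])) = real (hh 1 (mid @ [True]))"
    by (simp add: steps_hh)
  also have "\<dots> = 1 + real (cnt mid) + M mid" using hh_app[of 1 mid] by simp
  also have "\<dots> = real n / 2 + Max (walk mid ` {0..n - 2}) - walk mid (n - 2) / 2"
  proof -
    have a: "walk mid (n - 2) = real n - 2 - 2 * real (cnt mid)"
      using walk_len[of mid] len assms(1) by (simp add: of_nat_diff)
    have b: "Max (walk mid ` {0..n - 2}) = M mid" using M_Max[of mid] len by simp
    show ?thesis unfolding a b by (simp add: field_simps)
  qed
  finally show "real (steps_to_sort (False # mid @ [True])) =
     real n / 2 + Max (walk mid ` {0..n - 2}) - walk mid (n - 2) / 2" .
qed

end
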